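(* Assume $a_1\ge5$ and $a_2=1$. Let $\mu=k\Lambda_1-l\Lambda_2\in P$ with $k,l\in\mathbb Z$, and let $\{p^\mu_m\}_{m\in\mathbb Z}$ be defined by $p^\mu_0=l$, $p^\mu_1=k$, $p^\mu_{m+2}=a_2p^\mu_{m+1}-p^\mu_m$ ($m\ge0$ even), $p^\mu_{m+2}=a_1p^\mu_{m+1}-p^\mu_m$ ($m\ge0$ odd), and for $m<0$: $p^\mu_m=a_2p^\mu_{m+1}-p^\mu_{m+2}$ ($m$ even), $p^\mu_m=a_1p^\mu_{m+1}-p^\mu_{m+2}$ ($m$ odd). (1) If there exists $n\in\mathbb Z$ with $0<p^\mu_{2n}\le p^\mu_{2n+2}$, then $0<p^\mu_{2m}\le p^\mu_{2m+2}$ for all $m\ge n$. (2) If there exists $n\in\mathbb Z$ with $0<p^\mu_{2n}\le p^\mu_{2n-2}$, then $0<p^\mu_{2m}\le p^\mu_{2m-2}$ for all $m\le n$.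
   Context: $a_1,a_2$ are positive integers (here $a_2=1$, $a_1\ge5$), and $P=\mathbb Z\Lambda_1\oplus\mathbb Z\Lambda_2$ is the weight lattice of the Kac–Moody algebra with generalized Cartan matrix $\begin{pmatrix}2&-a_1\\-a_2&2\end{pmatrix}$, with fundamental weights $\Lambda_1,\Lambda_2$. *)

theory Defs
  imports Main
begin

fun pfwd :: "int \<Rightarrow> int \<Rightarrow> int \<Rightarrow> int \<Rightarrow> nat \<Rightarrow> int" where
  "pfwd a1 a2 k l 0 = l"
| "pfwd a1 a2 k l (Suc 0) = k"
| "pfwd a1 a2 k l (Suc (Suc m)) =
     (if even m then a2 else a1) * pfwd a1 a2 k l (Suc m) - pfwd a1 a2 k l m"

text \<open>Backward part: pbwd a1 a2 k l j = p_(-j) for j >= 0.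
  p_(-1) = a1 p_0 - p_1 ; p_(-(j+2)) = a(-(j+2)) p_(-(j+1)) - p_(-j),
  where -(j+2) has the parity of j.\<close>
fun pbwd :: "int \<Rightarrow> int \<Rightarrow> int \<Rightarrow> int \<Rightarrow> nat \<Rightarrow> int" where
  "pbwd a1 a2 k l 0 = l"
| "pbwd a1 a2 k l (Suc 0) = a1 * l - k"
| "pbwd a1 a2 k l (Suc (Suc j)) =
     (if even j then a2 else a1) * pbwd a1 a2 k l (Suc j) - pbwd a1 a2 k l j"

definition pseq :: "int \<Rightarrow> int \<Rightarrow> int \<Rightarrow> int \<Rightarrow> int \<Rightarrow> int" where
  "pseq a1 a2 k l m = (if 0 \<le> m then pfwd a1 a2 k l (nat m) else pbwd a1 a2 k l (nat (- m)))"

end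

theory Submission
  imports Defs
begin

lemma rec_all:
  fixes a1 a2 k l m :: int
  shows "pseq a1 a2 k l m + pseq a1 a2 k l (m+2) = (if even m then a2 else a1) * pseq a1 a2 k l (m+1)"
proof (cases "m \<ge> 0")
  case True
  then obtain n where n: "m = int n" by (metis nonneg_int_cases)
  have "nat (m+2) = Suc (Suc n)" "nat (m+1) = Suc n" using n by auto
  then show ?thesis using n by (simp add: pseq_def)
next
  case False
  show ?thesis
  proof (cases "m = -1")
    case True
    then show ?thesis by (simp add: pseq_def)
  next
    case F2: False
    define j where "j = nat (- m - 2)"
    have j: "m = - int j - 2" using False F2 unfolding j_def by simp
    have e: "nat (- m) = Suc (Suc j)" "nat (-(m+1)) = Suc j" using j by auto
    have jj: "nat (-(m+2)) = j" using j by simp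
    have "pseq a1 a2 k l (m+2) = pbwd a1 a2 k l j"
    proof (cases "j = 0")
      case True then show ?thesis using j by (simp add: pseq_def)
    next
      case False then show ?thesis using j jj by (simp add: pseq_def)
    qed
    moreover have "even m = even j" using j by simp
    ultimately show ?thesis using j e False by (simp add: pseq_def)
  qed
qed

lemma qrec:
  fixes a1 k l n :: int
  shows "pseq a1 1 k l (2*n+2) = (a1 - 2) * pseq a1 1 k l (2*n) - pseq a1 1 k l (2*n-2)"
proof -
  have A: "pseq a1 1 k l (2*n) + pseq a1 1 k l (2*n+2) = pseq a1 1 k l (2*n+1)"
    using rec_all[of a1 1 k l "2*n"] by simp
  have B: "pseq a1 1 k l (2*n-2) + pseq a1 1 k l (2*n) = pseq a1 1 k l (2*n-1)"
    using rec_all[of a1 1 k l "2*n-2"] by (simp add: algebra_simps)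
  have C: "pseq a1 1 k l (2*n-1) + pseq a1 1 k l (2*n+1) = a1 * pseq a1 1 k l (2*n)"
    using rec_all[of a1 1 k l "2*n-1"] by (simp add: algebra_simps)
  show ?thesis using A B C by (simp add: algebra_simps)
qed

theorem lemmaB1:
  fixes a1 a2 k l :: int
  assumes "a1 \<ge> 5" and "a2 = 1"
  shows "(\<forall>n. 0 < pseq a1 a2 k l (2*n) \<and> pseq a1 a2 k l (2*n) \<le> pseq a1 a2 k l (2*n+2)
            \<longrightarrow> (\<forall>m\<ge>n. 0 < pseq a1 a2 k l (2*m) \<and> pseq a1 a2 k l (2*m) \<le> pseq a1 a2 k l (2*m+2)))
       \<and> (\<forall>n. 0 < pseq a1 a2 k l (2*n) \<and> pseq a1 a2 k l (2*n) \<le> pseq a1 a2 k l (2*n-2)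
            \<longrightarrow> (\<forall>m\<le>n. 0 < pseq a1 a2 k l (2*m) \<and> pseq a1 a2 k l (2*m) \<le> pseq a1 a2 k l (2*m-2)))"
proof -
  define q where "q n = pseq a1 1 k l (2*n)" for n
  have r: "q (n+1) = (a1 - 2) * q n - q (n-1)" for n
    using qrec[of a1 k l n] unfolding q_def by (simp add: algebra_simps)
  have P1: "0 < q m \<and> q m \<le> q (m+1)" if "0 < q n \<and> q n \<le> q (n+1)" "m \<ge> n" for n m
    using that(2)
  proof (induction m rule: int_ge_induct)
    case base then show ?case using that(1) .
  next
    case (step i)
    have "q (i+1+1) = (a1 - 2) * q (i+1) - q i" using r[of "i+1"] by simp
    moreover have "(a1 - 2) * q (i+1) \<ge> 3 * q (i+1)" using assms(1) step.IH
      by (intro mult_right_mono) auto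
    ultimately show ?case using step.IH by linarith
  qed
  have P2: "0 < q m \<and> q m \<le> q (m-1)" if "0 < q n \<and> q n \<le> q (n-1)" "m \<le> n" for n m
    using that(2)
  proof (induction m rule: int_le_induct)
    case base then show ?case using that(1) .
  next
    case (step i)
    have "q i = (a1 - 2) * q (i-1) - q (i-1-1)" using r[of "i-1"] by simp
    moreover have "(a1 - 2) * q (i-1) \<ge> 3 * q (i-1)" using assms(1) step.IH
      by (intro mult_right_mono) auto
    ultimately show ?case using step.IH by linarith
  qed
  have e1: "pseq a1 a2 k l (2*n+2) = q (n+1)" for n unfolding q_def assms(2) by (simp add: algebra_simps)
  have e2: "pseq a1 a2 k l (2*n-2) = q (n-1)" for n unfolding q_def assms(2) by (simp add: algebra_simps)
  have e0: "pseq a1 a2 k l (2*n) = q n" for n unfolding q_def assms(2) by simp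
  show ?thesis unfolding e0 e1 e2 using P1 P2 by blast
qed

end
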